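(* Let $(\mathcal{S},\mathcal{A})$ be a finite directed acyclic graph with unique initial state $s_0$, unique sink state $s_f$, and terminating states $\mathcal{X}\subset\mathcal{S}$. For $i\in\{1,\dots,k\}$ let $p_{i,F}$ be a forward policy on this graph with partition function $Z_i>0$, reaching probability $u_i$, and terminating state distribution $p_i(x)=R_i(x)/Z_i$ where $R_i\ge0$. Let $\omega_1,\dots,\omega_k\ge0$, set $v_i=\omega_iZ_i/\sum_{j=1}^k\omega_jZ_j$, $u_M(s)=\sum_{i=1}^k v_iu_i(s)$, and $$p_{M,F}(s'\mid s)=\sum_{i=1}^k\frac{v_iu_i(s)}{u_M(s)}\,p_{i,F}(s'\mid s)\quad\text{for all } s\in\mathcal{S}\setminus\{s_f\}.$$ Let $p_M(s)$ (resp. $p_i(s)$) denote the probability that a trajectory sampled from $p_{M,F}$ (resp. $p_{i,F}$) terminates at state $s$. Then for all states $s$, $p_M(s)=\sum_{i=1}^k v_ip_i(s)$. Consequently, for $x\in\mathcal{X}$, $p_M(x)=\sum_{i=1}^k v_ip_i(x)\propto\sum_{i=1}^k\omega_iR_i(x)$.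
   Context: A forward policy $p_F$ assigns to each state $s\neq s_f$ a probability distribution $p_F(\cdot\mid s)$ over the children $s'$ of $s$ (states with $(s\to s')\in\mathcal{A}$); terminating states are those with an edge to $s_f$, and a trajectory terminates at $s$ if it takes the edge $s\to s_f$. Its reaching probability $u$ is defined by $u(s_0)=1$ and $u(s)=\sum_{s_*:(s_*\to s)\in\mathcal{A}}u(s_* )p_F(s\mid s_* )$ for $s\neq s_0$. The probability of terminating at $s$ equals $u(s)\,p_F(s_f\mid s)$. *)

theory Defs
  imports Complex_Main
begin

definition gfn_dag :: "'a set \<Rightarrow> ('a \<times> 'a) set \<Rightarrow> 'a \<Rightarrow> 'a \<Rightarrow> bool" where
  "gfn_dag S A s0 sf \<longleftrightarrow>
     finite S \<and> A \<subseteq> S \<times> S \<and> acyclic A \<and> s0 \<in> S \<and> sf \<in> S \<and> s0 \<noteq> sf \<and>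
     (\<forall>s\<in>S. (\<forall>t. (t, s) \<notin> A) \<longleftrightarrow> s = s0) \<and>
     (\<forall>s\<in>S. (\<forall>t. (s, t) \<notin> A) \<longleftrightarrow> s = sf)"

definition children :: "('a \<times> 'a) set \<Rightarrow> 'a \<Rightarrow> 'a set" where
  "children A s = {t. (s, t) \<in> A}"

definition parents :: "('a \<times> 'a) set \<Rightarrow> 'a \<Rightarrow> 'a set" where
  "parents A s = {t. (t, s) \<in> A}"

definition terminating_states :: "('a \<times> 'a) set \<Rightarrow> 'a \<Rightarrow> 'a set" where
  "terminating_states A sf = {s. (s, sf) \<in> A}"

definition forward_policy ::
  "'a set \<Rightarrow> ('a \<times> 'a) set \<Rightarrow> 'a \<Rightarrow> ('a \<Rightarrow> 'a \<Rightarrow> real) \<Rightarrow> bool" where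
  "forward_policy S A sf pF \<longleftrightarrow>
     (\<forall>s\<in>S - {sf}. (\<forall>t. 0 \<le> pF s t) \<and> (\<forall>t. t \<notin> children A s \<longrightarrow> pF s t = 0) \<and>
        (\<Sum>t\<in>children A s. pF s t) = 1)"

text \<open>u is the reaching probability of pF (defined by this recursion, which has a
  unique solution on a finite DAG).\<close>
definition reach_prob ::
  "'a set \<Rightarrow> ('a \<times> 'a) set \<Rightarrow> 'a \<Rightarrow> ('a \<Rightarrow> 'a \<Rightarrow> real) \<Rightarrow> ('a \<Rightarrow> real) \<Rightarrow> bool" where
  "reach_prob S A s0 pF u \<longleftrightarrow>
     u s0 = 1 \<and> (\<forall>s\<in>S - {s0}. u s = (\<Sum>t\<in>parents A s. u t * pF t s))"

definition term_prob :: "'a \<Rightarrow> ('a \<Rightarrow> 'a \<Rightarrow> real) \<Rightarrow> ('a \<Rightarrow> real) \<Rightarrow> 'a \<Rightarrow> real" where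
  "term_prob sf pF u s = u s * pF s sf"

end

theory Submission
  imports Defs
begin

theorem theoremA4:
  fixes S :: "'a set" and A :: "('a \<times> 'a) set" and s0 sf :: 'a and k :: nat
    and pF :: "nat \<Rightarrow> 'a \<Rightarrow> 'a \<Rightarrow> real" and u :: "nat \<Rightarrow> 'a \<Rightarrow> real"
    and R :: "nat \<Rightarrow> 'a \<Rightarrow> real" and Z :: "nat \<Rightarrow> real" and \<omega> :: "nat \<Rightarrow> real"
    and v :: "nat \<Rightarrow> real" and uM :: "'a \<Rightarrow> real" and pMF :: "'a \<Rightarrow> 'a \<Rightarrow> real"
    and uM' :: "'a \<Rightarrow> real"
  assumes G: "gfn_dag S A s0 sf"
    and pol: "\<forall>i\<in>{1..k}. forward_policy S A sf (pF i)"
    and reach: "\<forall>i\<in>{1..k}. reach_prob S A s0 (pF i) (u i)"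
    and Zpos: "\<forall>i\<in>{1..k}. Z i > 0"
    and Rnn: "\<forall>i\<in>{1..k}. \<forall>x\<in>terminating_states A sf. R i x \<ge> 0"
    and termp: "\<forall>i\<in>{1..k}. \<forall>x\<in>terminating_states A sf. term_prob sf (pF i) (u i) x = R i x / Z i"
    and wnn: "\<forall>i\<in>{1..k}. \<omega> i \<ge> 0"
    and v_def: "v = (\<lambda>i. \<omega> i * Z i / (\<Sum>j=1..k. \<omega> j * Z j))"
    and uM_def: "uM = (\<lambda>s. \<Sum>i=1..k. v i * u i s)"
    and pMF_def: "pMF = (\<lambda>s s'. \<Sum>i=1..k. v i * u i s / uM s * pF i s s')"
    and reachM: "reach_prob S A s0 pMF uM'"
  shows "(\<forall>s\<in>S. term_prob sf pMF uM' s = (\<Sum>i=1..k. v i * term_prob sf (pF i) (u i) s))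
       \<and> (\<forall>x\<in>terminating_states A sf.
            term_prob sf pMF uM' x = (\<Sum>i=1..k. \<omega> i * R i x) / (\<Sum>j=1..k. \<omega> j * Z j))"
proof -
  define D where "D = (\<Sum>j=1..k. \<omega> j * Z j)"
  have D0: "D \<ge> 0" unfolding D_def using wnn Zpos by (intro sum_nonneg) (simp add: less_imp_le)
  have vnn: "v i \<ge> 0" if "i \<in> {1..k}" for i
    unfolding v_def using wnn Zpos that D0 unfolding D_def by (intro divide_nonneg_nonneg mult_nonneg_nonneg) (auto simp: less_imp_le)
  have AS: "A \<subseteq> S \<times> S" and fin: "finite S" and acy: "acyclic A"
    and s0S: "s0 \<in> S" and sfS: "sf \<in> S"
    and src: "\<And>s. s \<in> S \<Longrightarrow> (\<forall>t. (t, s) \<notin> A) \<longleftrightarrow> s = s0"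
    and snk: "\<And>s. s \<in> S \<Longrightarrow> (\<forall>t. (s, t) \<notin> A) \<longleftrightarrow> s = sf"
    using G unfolding gfn_dag_def by auto
  have wfA: "wf A"
    by (rule finite_acyclic_wf[OF finite_subset[OF AS] acy]) (use fin in auto)
  have par_ok: "t \<in> S \<and> t \<noteq> sf" if "t \<in> parents A s" for t s
    using that AS snk unfolding parents_def by blast
  have unn: "\<forall>i\<in>{1..k}. u i s \<ge> 0" if "s \<in> S" for s
    using wfA that
  proof (induction s rule: wf_induct_rule)
    case (less s)
    show ?case
    proof
      fix i assume i: "i \<in> {1..k}"
      show "u i s \<ge> 0"
      proof (cases "s = s0")
        case True then show ?thesis using reach i unfolding reach_prob_def by auto
      next
        case False
        then have "u i s = (\<Sum>t\<in>parents A s. u i t * pF i t s)"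
          using reach i less.prems unfolding reach_prob_def by auto
        also have "\<dots> \<ge> 0"
        proof (intro sum_nonneg mult_nonneg_nonneg)
          fix t assume t: "t \<in> parents A s"
          then have "(t, s) \<in> A" unfolding parents_def by auto
          then show "0 \<le> u i t" using less.IH par_ok[OF t] i by auto
          show "0 \<le> pF i t s" using pol i par_ok[OF t] unfolding forward_policy_def by auto
        qed
        finally show ?thesis .
      qed
    qed
  qed
  have key: "uM s * pMF s t = (\<Sum>i=1..k. v i * u i s * pF i s t)" if "s \<in> S" for s t
  proof (cases "uM s = 0")
    case True
    have "\<forall>i\<in>{1..k}. v i * u i s = 0"
      using True unfolding uM_def
      by (subst sum_nonneg_eq_0_iff[symmetric]) (use vnn unn[OF that] in auto)
    then show ?thesis using True by (auto intro!: sum.neutral)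
  next
    case False
    show ?thesis unfolding pMF_def using False
      by (simp add: sum_distrib_left)
  qed
  have eq: "uM' s * pMF s t = (\<Sum>i=1..k. v i * u i s * pF i s t)" if "s \<in> S" for s t
  proof (cases "D = 0")
    case True
    then have "v = (\<lambda>i. 0)" unfolding v_def D_def by auto
    then show ?thesis unfolding pMF_def by simp
  next
    case False
    have "uM' s = uM s" if "s \<in> S" for s
      using wfA that
    proof (induction s rule: wf_induct_rule)
      case (less s)
      show ?case
      proof (cases "s = s0")
        case True
        have "uM s0 = (\<Sum>i=1..k. v i)"
          unfolding uM_def using reach unfolding reach_prob_def by (intro sum.cong) auto
        also have "\<dots> = (\<Sum>i=1..k. \<omega> i * Z i) / D" unfolding v_def D_def
          by (simp only: sum_divide_distrib)
        also have "\<dots> = 1" using False unfolding D_def by simp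
        finally show ?thesis using True reachM unfolding reach_prob_def by simp
      next
        case F: False
        have "uM' s = (\<Sum>t\<in>parents A s. uM' t * pMF t s)"
          using reachM F less.prems unfolding reach_prob_def by auto
        also have "\<dots> = (\<Sum>t\<in>parents A s. uM t * pMF t s)"
          using less.IH par_ok unfolding parents_def by (intro sum.cong) auto
        also have "\<dots> = (\<Sum>t\<in>parents A s. \<Sum>i=1..k. v i * u i t * pF i t s)"
          using key par_ok by (intro sum.cong) auto
        also have "\<dots> = (\<Sum>i=1..k. v i * (\<Sum>t\<in>parents A s. u i t * pF i t s))"
          by (subst sum.swap) (simp add: sum_distrib_left mult.assoc)
        also have "\<dots> = (\<Sum>i=1..k. v i * u i s)"
          using reach F less.prems unfolding reach_prob_def by (intro sum.cong) auto
        finally show ?thesis unfolding uM_def .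
      qed
    qed
    then show ?thesis using key that by simp
  qed
  have part1: "\<forall>s\<in>S. term_prob sf pMF uM' s = (\<Sum>i=1..k. v i * term_prob sf (pF i) (u i) s)"
    unfolding term_prob_def using eq by (simp add: mult.assoc)
  have part2: "term_prob sf pMF uM' x = (\<Sum>i=1..k. \<omega> i * R i x) / D"
    if x: "x \<in> terminating_states A sf" for x
  proof -
    have "x \<in> S" using x AS unfolding terminating_states_def by auto
    then have "term_prob sf pMF uM' x = (\<Sum>i=1..k. v i * (R i x / Z i))"
      using part1 termp x by (auto intro: sum.cong)
    also have "\<dots> = (\<Sum>i=1..k. \<omega> i * R i x / D)"
      unfolding v_def D_def using Zpos by (intro sum.cong) (auto simp: less_imp_neq[symmetric])
    finally show ?thesis by (simp add: sum_divide_distrib)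
  qed
  show ?thesis using part1 part2 unfolding D_def by blast
qed

end
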